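(* Suppose $\theta$ is the Exponential law with rate $1$. Then the unique stationary distribution $\pi_n$ of the gap process $\mathbf{Y}$ is $\mathrm{Exp}(1)^{\otimes(n-1)}$, i.e. the law on $\mathbb{R}_+^{n-1}$ with density $\exp(-\sum_{i=1}^{n-1}y_i)$.
   Context: Fix $n\ge 2$. The $n$-particle Stochastic Follow-the-Leader system $\mathbf{X}=(X_1,\dots,X_n)$ on $\mathbb{R}$, with $X_n(t)<\dots<X_1(t)$, evolves as a pure jump Markov process: the leader $X_1$ jumps forward at rate $1$ with i.i.d. jump sizes of law $\theta$; for $i\ge 2$, particle $X_i$ jumps at rate $X_{i-1}-X_i$ to a location chosen uniformly in $(X_i,X_{i-1})$. The gap process is $Y_i(t)=X_i(t)-X_{i+1}(t)$, $i=1,\dots,n-1$; it is a Markov process on $\mathbb{R}_+^{n-1}$ with generator $$\mathcal{L}_nf(\mathbf{y})=y_{n-1}\mathbb{E}_U[f(\mathbf{y}-y_{n-1}Ue_{n-1})-f(\mathbf{y})]+\sum_{i=1}^{n-2}y_i\mathbb{E}_U[f(\mathbf{y}+y_iU(e_{i+1}-e_i))-f(\mathbf{y})]+\mathbb{E}_\theta[f(\mathbf{y}+Ze_1)-f(\mathbf{y})],$$ $U\sim\mathrm{U}(0,1)$, $Z\sim\theta$. It is known that this process has a unique stationary distribution $\pi_n$. *)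

theory Defs
  imports "HOL-Probability.Probability"
begin

text \<open>Gaps are indexed 1..n-1; a state is a function y :: nat => real
  (coordinates outside 1..n-1 are irrelevant). The law U(0,1):\<close>

definition U01 :: "real measure" where
  "U01 = uniform_measure lborel {0..1}"

definition Exp1 :: "real measure" where
  "Exp1 = density lborel (exponential_density 1)"

definition gap_gen ::
  "nat \<Rightarrow> real measure \<Rightarrow> ((nat \<Rightarrow> real) \<Rightarrow> real) \<Rightarrow> (nat \<Rightarrow> real) \<Rightarrow> real" where
  "gap_gen n theta f y =
     y (n - 1) * (\<integral>u. f (y(n - 1 := y (n - 1) - y (n - 1) * u)) - f y \<partial>U01)
   + (\<Sum>i\<in>{1..n - 2}. y i * (\<integral>u. f (y(i := y i - y i * u, Suc i := y (Suc i) + y i * u)) - f y \<partial>U01))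
   + (\<integral>z. f (y(1 := y 1 + z)) - f y \<partial>theta)"

definition gap_space :: "nat \<Rightarrow> (nat \<Rightarrow> real) measure" where
  "gap_space n = PiM {1..n - 1} (\<lambda>_. borel)"

text \<open>Stationarity of a probability law mu on R_+^{n-1} for the gap process,
  in the infinitesimal (generator) sense: for every bounded measurable test
  function f, L_n f is mu-integrable and integrates to 0.\<close>

definition gap_stationary :: "nat \<Rightarrow> real measure \<Rightarrow> (nat \<Rightarrow> real) measure \<Rightarrow> bool" where
  "gap_stationary n theta mu \<longleftrightarrow>
     prob_space mu \<and> sets mu = sets (gap_space n) \<and>
     (AE y in mu. \<forall>i\<in>{1..n - 1}. 0 \<le> y i) \<and>
     (\<forall>f. f \<in> borel_measurable (gap_space n) \<and> (\<exists>B. \<forall>y. \<bar>f y\<bar> \<le> B) \<longrightarrow>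
        integrable mu (gap_gen n theta f) \<and> (\<integral>y. gap_gen n theta f y \<partial>mu) = 0)"

end

theory Submission
  imports Defs
begin


lemma sets_Exp1[measurable_cong, simp]: "sets Exp1 = sets borel"
  by (simp add: Exp1_def)
lemma space_Exp1[simp]: "space Exp1 = UNIV"
  by (simp add: Exp1_def)
lemma sets_U01[measurable_cong, simp]: "sets U01 = sets borel"
  by (simp add: U01_def)
lemma space_U01[simp]: "space U01 = UNIV"
  by (simp add: U01_def)
lemma prob_Exp1: "prob_space Exp1"
  unfolding Exp1_def by (rule prob_space_exponential_density) simp
lemma prob_U01: "prob_space U01"
  unfolding U01_def by (rule prob_space_uniform_measure) auto

lemma Exp1_nn:
  assumes [measurable]: "H \<in> borel_measurable borel"
  shows "(\<integral>\<^sup>+t. H t \<partial>Exp1) = (\<integral>\<^sup>+t. ennreal (exp (-t)) * indicator {0..} t * H t \<partial>lborel)"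
  unfolding Exp1_def
  by (subst nn_integral_density) (auto intro!: nn_integral_cong simp: exponential_density_def indicator_def)

lemma exp_total: "(\<integral>\<^sup>+t. ennreal (exp (-t)) * indicator {0..} t \<partial>lborel) = 1"
proof -
  interpret prob_space Exp1 by (rule prob_Exp1)
  have "(\<integral>\<^sup>+t. 1 \<partial>Exp1) = 1" using emeasure_space_1 by simp
  then show ?thesis by (subst (asm) Exp1_nn) auto
qed

lemma exp_tail:
  assumes "0 \<le> w"
  shows "(\<integral>\<^sup>+t. ennreal (exp (-t)) * indicator {w..} t \<partial>lborel) = ennreal (exp (-w))"
proof -
  have "(\<integral>\<^sup>+t. ennreal (exp (-t)) * indicator {w..} t \<partial>lborel)
     = ennreal \<bar>1\<bar> * (\<integral>\<^sup>+s. ennreal (exp (-(w + 1 * s))) * indicator {w..} (w + 1 * s) \<partial>lborel)"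
    by (rule nn_integral_real_affine) auto
  also have "\<dots> = (\<integral>\<^sup>+s. ennreal (exp (-w)) * (ennreal (exp (-s)) * indicator {0..} s) \<partial>lborel)"
    by (simp, intro nn_integral_cong) (auto simp: indicator_def ennreal_mult[symmetric] mult_exp_exp)
  also have "\<dots> = ennreal (exp (-w))"
    by (subst nn_integral_cmult) (auto simp: exp_total)
  finally show ?thesis .
qed

lemma bochner_nn:
  fixes H :: "'a \<Rightarrow> real"
  assumes "prob_space N" "H \<in> borel_measurable N" "\<And>x. 0 \<le> H x" "\<And>x. H x \<le> K"
  shows "ennreal (\<integral>x. H x \<partial>N) = (\<integral>\<^sup>+x. ennreal (H x) \<partial>N)"
proof -
  interpret prob_space N by fact
  have "integrable N H"
    by (rule integrable_const_bound[where B=K]) (use assms in auto)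
  then show ?thesis by (rule nn_integral_eq_integral[symmetric]) (use assms in auto)
qed

lemma U01_nn:
  assumes [measurable]: "H \<in> borel_measurable borel"
  shows "(\<integral>\<^sup>+u. H u \<partial>U01) = (\<integral>\<^sup>+u. H u * indicator {0..1} u \<partial>lborel)"
  unfolding U01_def by (subst nn_integral_uniform_measure) (auto simp: divide_ennreal_def)

lemma sub_scale:
  assumes [measurable]: "G \<in> borel_measurable borel" and t: "0 \<le> t"
  shows "ennreal t * (\<integral>\<^sup>+u. ennreal (G (t - t*u)) * indicator {0..1} u \<partial>lborel)
       = (\<integral>\<^sup>+w. ennreal (G w) * indicator {0..t} w \<partial>lborel)"
proof (cases "t = 0")
  case True
  then show ?thesis by simp
next
  case False
  then have tp: "0 < t" using t by simp
  have "(\<integral>\<^sup>+w. ennreal (G w) * indicator {0..t} w \<partial>lborel)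
     = ennreal \<bar>-t\<bar> * (\<integral>\<^sup>+u. ennreal (G (t + (-t) * u)) * indicator {0..t} (t + (-t) * u) \<partial>lborel)"
    by (rule nn_integral_real_affine) (use tp in auto)
  also have "\<dots> = ennreal t * (\<integral>\<^sup>+u. ennreal (G (t - t*u)) * indicator {0..1} u \<partial>lborel)"
  proof -
    have "indicator {0..t} (t + (-t) * u) = (indicator {0..1} u :: ennreal)" for u
    proof -
      have "(0 \<le> t + (-t) * u \<and> t + (-t) * u \<le> t) \<longleftrightarrow> (0 \<le> u \<and> u \<le> 1)"
        using tp by (auto simp: field_simps mult_le_cancel_left1 mult_le_0_iff zero_le_mult_iff)
      then show ?thesis by (auto simp: indicator_def)
    qed
    then show ?thesis using tp by simp
  qed
  finally show ?thesis by simp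
qed

lemma A_inner:
  assumes [measurable]: "G \<in> borel_measurable borel" and G: "\<And>x. 0 \<le> G x" "\<And>x. G x \<le> K" and t: "0 \<le> t"
  shows "ennreal (t * (\<integral>u. G (t - t*u) \<partial>U01)) = (\<integral>\<^sup>+w. ennreal (G w) * indicator {0..t} w \<partial>lborel)"
proof -
  have "ennreal (\<integral>u. G (t - t*u) \<partial>U01) = (\<integral>\<^sup>+u. ennreal (G (t - t*u)) \<partial>U01)"
    by (rule bochner_nn[OF prob_U01 _ G]) simp
  also have "\<dots> = (\<integral>\<^sup>+u. ennreal (G (t - t*u)) * indicator {0..1} u \<partial>lborel)"
    by (rule U01_nn) simp
  finally have *: "ennreal (\<integral>u. G (t - t*u) \<partial>U01) = \<dots>" .
  have "0 \<le> (\<integral>u. G (t - t*u) \<partial>U01)" by (rule integral_nonneg_AE) (use G in auto)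
  then have "ennreal (t * (\<integral>u. G (t - t*u) \<partial>U01)) = ennreal t * ennreal (\<integral>u. G (t - t*u) \<partial>U01)"
    using t by (simp add: ennreal_mult)
  also have "\<dots> = (\<integral>\<^sup>+w. ennreal (G w) * indicator {0..t} w \<partial>lborel)"
    unfolding * by (rule sub_scale) (use t in auto)
  finally show ?thesis .
qed

lemma U01_int_meas[measurable (raw)]:
  fixes f :: "'a \<Rightarrow> real \<Rightarrow> real"
  shows "case_prod f \<in> borel_measurable (N \<Otimes>\<^sub>M U01) \<Longrightarrow> (\<lambda>x. \<integral>y. f x y \<partial>U01) \<in> borel_measurable N"
  by (rule sigma_finite_measure.borel_measurable_lebesgue_integral[OF prob_space_imp_sigma_finite[OF prob_U01]])
lemma Exp1_int_meas[measurable (raw)]: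
  fixes f :: "'a \<Rightarrow> real \<Rightarrow> real"
  shows "case_prod f \<in> borel_measurable (N \<Otimes>\<^sub>M Exp1) \<Longrightarrow> (\<lambda>x. \<integral>y. f x y \<partial>Exp1) \<in> borel_measurable N"
  by (rule sigma_finite_measure.borel_measurable_lebesgue_integral[OF prob_space_imp_sigma_finite[OF prob_Exp1]])
lemma Exp1_nn_meas[measurable (raw)]:
  "case_prod f \<in> borel_measurable (N \<Otimes>\<^sub>M Exp1) \<Longrightarrow> (\<lambda>x. \<integral>\<^sup>+y. f x y \<partial>Exp1) \<in> borel_measurable N"
  by (rule sigma_finite_measure.borel_measurable_nn_integral[OF prob_space_imp_sigma_finite[OF prob_Exp1]])

lemma pred_Icc[measurable (raw)]:
  fixes f g h :: "'a \<Rightarrow> real"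
  assumes [measurable]: "f \<in> borel_measurable M" "g \<in> borel_measurable M" "h \<in> borel_measurable M"
  shows "Measurable.pred M (\<lambda>x. f x \<in> {g x..h x})"
  unfolding atLeastAtMost_iff by measurable
lemma pred_Ici[measurable (raw)]:
  fixes f g :: "'a \<Rightarrow> real"
  assumes [measurable]: "f \<in> borel_measurable M" "g \<in> borel_measurable M"
  shows "Measurable.pred M (\<lambda>x. f x \<in> {g x..})"
  unfolding atLeast_iff by measurable

lemma A_1D:
  assumes [measurable]: "G \<in> borel_measurable borel" and G: "\<And>x. 0 \<le> G x" "\<And>x. G x \<le> K"
  shows "(\<integral>\<^sup>+t. ennreal (t * (\<integral>u. G (t - t*u) \<partial>U01)) \<partial>Exp1) = (\<integral>\<^sup>+t. ennreal (G t) \<partial>Exp1)"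
proof -
  have "(\<integral>\<^sup>+t. ennreal (t * (\<integral>u. G (t - t*u) \<partial>U01)) \<partial>Exp1)
     = (\<integral>\<^sup>+t. ennreal (exp (-t)) * indicator {0..} t * ennreal (t * (\<integral>u. G (t - t*u) \<partial>U01)) \<partial>lborel)"
    by (rule Exp1_nn) measurable
  also have "\<dots> = (\<integral>\<^sup>+t. ennreal (exp (-t)) * indicator {0..} t * (\<integral>\<^sup>+w. ennreal (G w) * indicator {0..t} w \<partial>lborel) \<partial>lborel)"
  proof (intro nn_integral_cong)
    fix t :: real
    show "ennreal (exp (-t)) * indicator {0..} t * ennreal (t * (\<integral>u. G (t - t*u) \<partial>U01))
      = ennreal (exp (-t)) * indicator {0..} t * (\<integral>\<^sup>+w. ennreal (G w) * indicator {0..t} w \<partial>lborel)"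
      by (cases "0 \<le> t") (simp_all add: A_inner[OF assms(1) G])
  qed
  also have "\<dots> = (\<integral>\<^sup>+t. \<integral>\<^sup>+w. ennreal (exp (-t)) * indicator {0..} t * (ennreal (G w) * indicator {0..t} w) \<partial>lborel \<partial>lborel)"
    by (intro nn_integral_cong) (simp add: nn_integral_cmult)
  also have "\<dots> = (\<integral>\<^sup>+w. \<integral>\<^sup>+t. ennreal (exp (-t)) * indicator {0..} t * (ennreal (G w) * indicator {0..t} w) \<partial>lborel \<partial>lborel)"
    by (rule lborel_pair.Fubini'[symmetric]) measurable
  also have "\<dots> = (\<integral>\<^sup>+w. (ennreal (G w) * indicator {0..} w) * (\<integral>\<^sup>+t. ennreal (exp (-t)) * indicator {w..} t \<partial>lborel) \<partial>lborel)"
    by (intro nn_integral_cong, subst nn_integral_cmult[symmetric]) (auto intro!: nn_integral_cong simp: indicator_def mult_ac)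
  also have "\<dots> = (\<integral>\<^sup>+w. ennreal (exp (-w)) * indicator {0..} w * ennreal (G w) \<partial>lborel)"
  proof (intro nn_integral_cong)
    fix w :: real
    show "ennreal (G w) * indicator {0..} w * (\<integral>\<^sup>+t. ennreal (exp (-t)) * indicator {w..} t \<partial>lborel)
      = ennreal (exp (-w)) * indicator {0..} w * ennreal (G w)"
      by (cases "0 \<le> w") (simp_all add: exp_tail mult_ac)
  qed
  also have "\<dots> = (\<integral>\<^sup>+t. ennreal (G t) \<partial>Exp1)"
    by (rule Exp1_nn[symmetric]) measurable
  finally show ?thesis .
qed

lemma C_inner:
  assumes [measurable]: "G \<in> borel_measurable borel" and G: "\<And>x. 0 \<le> G x" "\<And>x. G x \<le> K"
  shows "ennreal (\<integral>z. G (t + z) \<partial>Exp1) = (\<integral>\<^sup>+w. ennreal (exp (-(w - t))) * indicator {0..} (w - t) * ennreal (G w) \<partial>lborel)"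
proof -
  have "ennreal (\<integral>z. G (t + z) \<partial>Exp1) = (\<integral>\<^sup>+z. ennreal (G (t + z)) \<partial>Exp1)"
    by (rule bochner_nn[OF prob_Exp1 _ G]) simp
  also have "\<dots> = (\<integral>\<^sup>+z. ennreal (exp (-z)) * indicator {0..} z * ennreal (G (t + z)) \<partial>lborel)"
    by (rule Exp1_nn) simp
  also have "\<dots> = ennreal \<bar>1\<bar> * (\<integral>\<^sup>+z. ennreal (exp (-((t + 1 * z) - t))) * indicator {0..} ((t + 1 * z) - t) * ennreal (G (t + 1 * z)) \<partial>lborel)"
    by simp
  also have "\<dots> = (\<integral>\<^sup>+w. ennreal (exp (-(w - t))) * indicator {0..} (w - t) * ennreal (G w) \<partial>lborel)"
    by (rule nn_integral_real_affine[symmetric]) auto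
  finally show ?thesis .
qed

lemma C_1D:
  assumes [measurable]: "G \<in> borel_measurable borel" and G: "\<And>x. 0 \<le> G x" "\<And>x. G x \<le> K"
  shows "(\<integral>\<^sup>+t. ennreal (\<integral>z. G (t + z) \<partial>Exp1) \<partial>Exp1) = (\<integral>\<^sup>+t. ennreal (t * G t) \<partial>Exp1)"
proof -
  have "(\<integral>\<^sup>+t. ennreal (\<integral>z. G (t + z) \<partial>Exp1) \<partial>Exp1)
     = (\<integral>\<^sup>+t. ennreal (exp (-t)) * indicator {0..} t * ennreal (\<integral>z. G (t + z) \<partial>Exp1) \<partial>lborel)"
    by (rule Exp1_nn) measurable
  also have "\<dots> = (\<integral>\<^sup>+t. \<integral>\<^sup>+w. ennreal (exp (-t)) * indicator {0..} t * (ennreal (exp (-(w - t))) * indicator {0..} (w - t) * ennreal (G w)) \<partial>lborel \<partial>lborel)"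
    by (intro nn_integral_cong) (simp add: C_inner[OF assms(1) G] nn_integral_cmult)
  also have "\<dots> = (\<integral>\<^sup>+t. \<integral>\<^sup>+w. ennreal (exp (-w) * G w) * indicator {0..w} t \<partial>lborel \<partial>lborel)"
  proof (intro nn_integral_cong)
    fix t w :: real
    show "ennreal (exp (-t)) * indicator {0..} t * (ennreal (exp (-(w - t))) * indicator {0..} (w - t) * ennreal (G w))
      = ennreal (exp (-w) * G w) * indicator {0..w} t"
      using G[of w] by (auto simp: indicator_def ennreal_mult[symmetric] mult_exp_exp)
  qed
  also have "\<dots> = (\<integral>\<^sup>+w. \<integral>\<^sup>+t. ennreal (exp (-w) * G w) * indicator {0..w} t \<partial>lborel \<partial>lborel)"
    by (rule lborel_pair.Fubini'[symmetric]) measurable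
  also have "\<dots> = (\<integral>\<^sup>+w. ennreal (exp (-w)) * indicator {0..} w * ennreal (w * G w) \<partial>lborel)"
  proof (intro nn_integral_cong)
    fix w :: real
    show "(\<integral>\<^sup>+t. ennreal (exp (-w) * G w) * indicator {0..w} t \<partial>lborel) = ennreal (exp (-w)) * indicator {0..} w * ennreal (w * G w)"
      using G[of w] by (subst nn_integral_cmult_indicator, simp, cases "0 \<le> w") (simp_all add: emeasure_lborel_Icc_eq ennreal_mult[symmetric] mult_ac)
  qed
  also have "\<dots> = (\<integral>\<^sup>+t. ennreal (t * G t) \<partial>Exp1)"
    by (rule Exp1_nn[symmetric]) measurable
  finally show ?thesis .
qed

lemma lborel_nn_meas[measurable (raw)]:
  "case_prod f \<in> borel_measurable (N \<Otimes>\<^sub>M lborel) \<Longrightarrow> (\<lambda>x. \<integral>\<^sup>+y. f x y \<partial>lborel) \<in> borel_measurable N"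
  by (rule lborel.borel_measurable_nn_integral)

definition ee :: "real \<Rightarrow> ennreal" where
  "ee x = ennreal (exp (-x)) * indicator {0..} x"

lemma ee_meas[measurable]: "ee \<in> borel_measurable borel"
  unfolding ee_def by measurable

lemma Exp1_ee:
  assumes [measurable]: "H \<in> borel_measurable borel"
  shows "(\<integral>\<^sup>+t. H t \<partial>Exp1) = (\<integral>\<^sup>+t. ee t * H t \<partial>lborel)"
  unfolding ee_def by (rule Exp1_nn) simp

lemma ee_prod: "ee x * ee y = (if 0 \<le> x \<and> 0 \<le> y then ennreal (exp (-(x+y))) else 0)"
  by (auto simp: ee_def indicator_def ennreal_mult[symmetric] mult_exp_exp)

lemma B_2D:
  assumes [measurable]: "case_prod G2 \<in> borel_measurable (borel \<Otimes>\<^sub>M borel)"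
    and G: "\<And>x y. 0 \<le> G2 x y" "\<And>x y. G2 x y \<le> K"
  shows "(\<integral>\<^sup>+b. \<integral>\<^sup>+a. ennreal (a * (\<integral>u. G2 (a - a*u) (b + a*u) \<partial>U01)) \<partial>Exp1 \<partial>Exp1)
       = (\<integral>\<^sup>+b. \<integral>\<^sup>+a. ennreal (b * G2 a b) \<partial>Exp1 \<partial>Exp1)"
proof -
  have inner: "ennreal (a * (\<integral>u. G2 (a - a*u) (b + a*u) \<partial>U01))
      = (\<integral>\<^sup>+w. ennreal (G2 w (b + a - w)) * indicator {0..a} w \<partial>lborel)" if "0 \<le> a" for a b
  proof -
    have "ennreal (a * (\<integral>u. G2 (a - a*u) (b + a*u) \<partial>U01)) = ennreal (a * (\<integral>u. (\<lambda>w. G2 w (b + a - w)) (a - a*u) \<partial>U01))"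
      by (simp add: algebra_simps)
    also have "\<dots> = (\<integral>\<^sup>+w. ennreal (G2 w (b + a - w)) * indicator {0..a} w \<partial>lborel)"
      by (rule A_inner[where K=K]) (use G that in auto)
    finally show ?thesis .
  qed
  have "(\<integral>\<^sup>+b. \<integral>\<^sup>+a. ennreal (a * (\<integral>u. G2 (a - a*u) (b + a*u) \<partial>U01)) \<partial>Exp1 \<partial>Exp1)
     = (\<integral>\<^sup>+b. ee b * (\<integral>\<^sup>+a. ee a * ennreal (a * (\<integral>u. G2 (a - a*u) (b + a*u) \<partial>U01)) \<partial>lborel) \<partial>lborel)"
    by (subst Exp1_ee, measurable, intro nn_integral_cong, subst Exp1_ee, measurable)
  also have "\<dots> = (\<integral>\<^sup>+b. \<integral>\<^sup>+a. \<integral>\<^sup>+w. ee b * ee a * (ennreal (G2 w (b + a - w)) * indicator {0..a} w) \<partial>lborel \<partial>lborel \<partial>lborel)"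
  proof (intro nn_integral_cong)
    fix b :: real
    have "ee b * (\<integral>\<^sup>+a. ee a * ennreal (a * (\<integral>u. G2 (a - a*u) (b + a*u) \<partial>U01)) \<partial>lborel)
       = (\<integral>\<^sup>+a. ee b * (ee a * ennreal (a * (\<integral>u. G2 (a - a*u) (b + a*u) \<partial>U01))) \<partial>lborel)"
      by (rule nn_integral_cmult[symmetric]) measurable
    also have "\<dots> = (\<integral>\<^sup>+a. \<integral>\<^sup>+w. ee b * ee a * (ennreal (G2 w (b + a - w)) * indicator {0..a} w) \<partial>lborel \<partial>lborel)"
    proof (intro nn_integral_cong)
      fix a :: real
      show "ee b * (ee a * ennreal (a * (\<integral>u. G2 (a - a*u) (b + a*u) \<partial>U01)))
        = (\<integral>\<^sup>+w. ee b * ee a * (ennreal (G2 w (b + a - w)) * indicator {0..a} w) \<partial>lborel)"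
      proof (cases "0 \<le> a")
        case True
        then show ?thesis by (subst nn_integral_cmult) (simp_all add: inner mult.assoc)
      next
        case False
        then show ?thesis by (simp add: ee_def)
      qed
    qed
    finally show "ee b * (\<integral>\<^sup>+a. ee a * ennreal (a * (\<integral>u. G2 (a - a*u) (b + a*u) \<partial>U01)) \<partial>lborel)
       = (\<integral>\<^sup>+a. \<integral>\<^sup>+w. ee b * ee a * (ennreal (G2 w (b + a - w)) * indicator {0..a} w) \<partial>lborel \<partial>lborel)" .
  qed
  also have "\<dots> = (\<integral>\<^sup>+b. \<integral>\<^sup>+w. \<integral>\<^sup>+a. ee b * ee a * (ennreal (G2 w (b + a - w)) * indicator {0..a} w) \<partial>lborel \<partial>lborel \<partial>lborel)"
    by (rule nn_integral_cong, rule lborel_pair.Fubini') measurable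
  also have "\<dots> = (\<integral>\<^sup>+b. \<integral>\<^sup>+w. \<integral>\<^sup>+v. ee b * ee (w + v) * (ennreal (G2 w (b + v)) * indicator {0..w+v} w) \<partial>lborel \<partial>lborel \<partial>lborel)"
  proof (rule nn_integral_cong, rule nn_integral_cong)
    fix b w :: real
    have "(\<integral>\<^sup>+a. ee b * ee a * (ennreal (G2 w (b + a - w)) * indicator {0..a} w) \<partial>lborel)
      = ennreal \<bar>1\<bar> * (\<integral>\<^sup>+v. ee b * ee (w + 1 * v) * (ennreal (G2 w (b + (w + 1 * v) - w)) * indicator {0..w + 1 * v} w) \<partial>lborel)"
      by (rule nn_integral_real_affine) measurable
    then show "(\<integral>\<^sup>+a. ee b * ee a * (ennreal (G2 w (b + a - w)) * indicator {0..a} w) \<partial>lborel)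
      = (\<integral>\<^sup>+v. ee b * ee (w + v) * (ennreal (G2 w (b + v)) * indicator {0..w+v} w) \<partial>lborel)"
      by simp
  qed
  also have "\<dots> = (\<integral>\<^sup>+w. \<integral>\<^sup>+b. \<integral>\<^sup>+v. ee b * ee (w + v) * (ennreal (G2 w (b + v)) * indicator {0..w+v} w) \<partial>lborel \<partial>lborel \<partial>lborel)"
    by (rule lborel_pair.Fubini') measurable
  also have "\<dots> = (\<integral>\<^sup>+w. \<integral>\<^sup>+v. \<integral>\<^sup>+b. ee b * ee (w + v) * (ennreal (G2 w (b + v)) * indicator {0..w+v} w) \<partial>lborel \<partial>lborel \<partial>lborel)"
    by (rule nn_integral_cong, rule lborel_pair.Fubini') measurable
  also have "\<dots> = (\<integral>\<^sup>+w. \<integral>\<^sup>+v. \<integral>\<^sup>+c. ee w * ee c * (ennreal (G2 w c) * indicator {0..c} v) \<partial>lborel \<partial>lborel \<partial>lborel)"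
  proof (rule nn_integral_cong, rule nn_integral_cong)
    fix w v :: real
    have "(\<integral>\<^sup>+b. ee b * ee (w + v) * (ennreal (G2 w (b + v)) * indicator {0..w+v} w) \<partial>lborel)
      = ennreal \<bar>1\<bar> * (\<integral>\<^sup>+c. ee (-v + 1 * c) * ee (w + v) * (ennreal (G2 w ((-v + 1 * c) + v)) * indicator {0..w+v} w) \<partial>lborel)"
      by (rule nn_integral_real_affine) measurable
    also have "\<dots> = (\<integral>\<^sup>+c. ee w * ee c * (ennreal (G2 w c) * indicator {0..c} v) \<partial>lborel)"
    proof (simp, rule nn_integral_cong)
      fix c :: real
      show "ee (c - v) * ee (w + v) * (ennreal (G2 w c) * indicator {0..w + v} w) = ee w * ee c * (ennreal (G2 w c) * indicator {0..c} v)"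
      proof -
        have e: "-((c - v) + (w + v)) = -(w + c)" by simp
        show ?thesis unfolding ee_prod e by (auto simp: indicator_def)
      qed
    qed
    finally show "(\<integral>\<^sup>+b. ee b * ee (w + v) * (ennreal (G2 w (b + v)) * indicator {0..w+v} w) \<partial>lborel)
      = (\<integral>\<^sup>+c. ee w * ee c * (ennreal (G2 w c) * indicator {0..c} v) \<partial>lborel)" .
  qed
  also have "\<dots> = (\<integral>\<^sup>+w. \<integral>\<^sup>+c. \<integral>\<^sup>+v. ee w * ee c * (ennreal (G2 w c) * indicator {0..c} v) \<partial>lborel \<partial>lborel \<partial>lborel)"
    by (rule nn_integral_cong, rule lborel_pair.Fubini') measurable
  also have "\<dots> = (\<integral>\<^sup>+w. \<integral>\<^sup>+c. ee w * ee c * ennreal (c * G2 w c) \<partial>lborel \<partial>lborel)"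
  proof (rule nn_integral_cong, rule nn_integral_cong)
    fix w c :: real
    show "(\<integral>\<^sup>+v. ee w * ee c * (ennreal (G2 w c) * indicator {0..c} v) \<partial>lborel) = ee w * ee c * ennreal (c * G2 w c)"
    proof -
      have "(\<integral>\<^sup>+v. ee w * ee c * (ennreal (G2 w c) * indicator {0..c} v) \<partial>lborel)
         = (\<integral>\<^sup>+v. (ee w * ee c * ennreal (G2 w c)) * indicator {0..c} v \<partial>lborel)"
        by (simp only: mult.assoc)
      also have "\<dots> = ee w * ee c * ennreal (G2 w c) * emeasure lborel {0..c}"
        by (rule nn_integral_cmult_indicator) simp
      also have "\<dots> = ee w * ee c * ennreal (c * G2 w c)"
        using G(1)[of w c]
        by (cases "0 \<le> c") (simp_all add: emeasure_lborel_Icc_eq ennreal_mult' ee_def mult_ac)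
      finally show ?thesis .
    qed
  qed
  also have "\<dots> = (\<integral>\<^sup>+c. \<integral>\<^sup>+w. ee w * ee c * ennreal (c * G2 w c) \<partial>lborel \<partial>lborel)"
    by (rule lborel_pair.Fubini'[symmetric]) measurable
  also have "\<dots> = (\<integral>\<^sup>+b. \<integral>\<^sup>+a. ennreal (b * G2 a b) \<partial>Exp1 \<partial>Exp1)"
  proof -
    have "(\<integral>\<^sup>+b. \<integral>\<^sup>+a. ennreal (b * G2 a b) \<partial>Exp1 \<partial>Exp1)
        = (\<integral>\<^sup>+b. ee b * (\<integral>\<^sup>+a. ennreal (b * G2 a b) \<partial>Exp1) \<partial>lborel)"
      by (rule Exp1_ee) measurable
    also have "\<dots> = (\<integral>\<^sup>+b. ee b * (\<integral>\<^sup>+a. ee a * ennreal (b * G2 a b) \<partial>lborel) \<partial>lborel)"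
    proof (rule nn_integral_cong)
      fix b :: real
      have "(\<integral>\<^sup>+a. ennreal (b * G2 a b) \<partial>Exp1) = (\<integral>\<^sup>+a. ee a * ennreal (b * G2 a b) \<partial>lborel)"
        by (rule Exp1_ee) measurable
      then show "ee b * (\<integral>\<^sup>+a. ennreal (b * G2 a b) \<partial>Exp1) = ee b * (\<integral>\<^sup>+a. ee a * ennreal (b * G2 a b) \<partial>lborel)"
        by simp
    qed
    also have "\<dots> = (\<integral>\<^sup>+b. \<integral>\<^sup>+a. ee a * ee b * ennreal (b * G2 a b) \<partial>lborel \<partial>lborel)"
    proof (rule nn_integral_cong)
      fix b :: real
      have "ee b * (\<integral>\<^sup>+a. ee a * ennreal (b * G2 a b) \<partial>lborel) = (\<integral>\<^sup>+a. ee b * (ee a * ennreal (b * G2 a b)) \<partial>lborel)"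
        by (rule nn_integral_cmult[symmetric]) measurable
      then show "ee b * (\<integral>\<^sup>+a. ee a * ennreal (b * G2 a b) \<partial>lborel) = (\<integral>\<^sup>+a. ee a * ee b * ennreal (b * G2 a b) \<partial>lborel)"
        by (simp add: mult_ac)
    qed
    finally show ?thesis by simp
  qed
  finally show ?thesis .
qed



lemma upd_meas[measurable (raw)]:
  "k \<in> I \<Longrightarrow> h \<in> measurable N (PiM I Mi) \<Longrightarrow> v \<in> measurable N (Mi k) \<Longrightarrow>
    (\<lambda>x. (h x)(k := v x)) \<in> measurable N (PiM I Mi)"
  by (rule measurable_fun_upd[where J=I]) auto

interpretation PS: product_sigma_finite "\<lambda>_::nat. Exp1"
  by (simp add: product_sigma_finite_def prob_space_imp_sigma_finite[OF prob_Exp1])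

lemma lift1:
  fixes I :: "nat set"
  assumes I: "finite I" "k \<in> I" and [measurable]: "F \<in> borel_measurable (PiM I (\<lambda>_. Exp1))"
  shows "(\<integral>\<^sup>+y. F y \<partial>PiM I (\<lambda>_. Exp1)) = (\<integral>\<^sup>+x. \<integral>\<^sup>+t. F (x(k := t)) \<partial>Exp1 \<partial>PiM (I - {k}) (\<lambda>_. Exp1))"
proof -
  have e: "I = insert k (I - {k})" using I by auto
  have "F \<in> borel_measurable (PiM (insert k (I - {k})) (\<lambda>_. Exp1))" using e by simp
  then have "integral\<^sup>N (PiM (insert k (I - {k})) (\<lambda>_. Exp1)) F = (\<integral>\<^sup>+x. \<integral>\<^sup>+t. F (x(k := t)) \<partial>Exp1 \<partial>PiM (I - {k}) (\<lambda>_. Exp1))"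
    by (rule PS.product_nn_integral_insert[rotated 2]) (use I in auto)
  then show ?thesis using e by simp
qed

lemma lift2:
  fixes I :: "nat set"
  assumes I: "finite I" "i \<in> I" "j \<in> I" "i \<noteq> j" and [measurable]: "F \<in> borel_measurable (PiM I (\<lambda>_. Exp1))"
  shows "(\<integral>\<^sup>+y. F y \<partial>PiM I (\<lambda>_. Exp1)) = (\<integral>\<^sup>+x. \<integral>\<^sup>+b. \<integral>\<^sup>+a. F (x(j := b, i := a)) \<partial>Exp1 \<partial>Exp1 \<partial>PiM (I - {i} - {j}) (\<lambda>_. Exp1))"
proof -
  have j: "j \<in> I - {i}" using I by auto
  have [measurable]: "(\<lambda>p. (fst p)(i := snd p)) \<in> measurable (PiM (I - {i}) (\<lambda>_. Exp1) \<Otimes>\<^sub>M Exp1) (PiM I (\<lambda>_. Exp1))"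
    by (rule measurable_fun_upd[where J="I - {i}"]) (use I in auto)
  have [measurable]: "(\<lambda>x. \<integral>\<^sup>+t. F (x(i := t)) \<partial>Exp1) \<in> borel_measurable (PiM (I - {i}) (\<lambda>_. Exp1))"
    by measurable
  show ?thesis
    by (subst lift1[OF I(1,2)], measurable, subst lift1[OF _ j]) (use I in auto)
qed

lemma Exp1_mean: "(\<integral>\<^sup>+t. ennreal t \<partial>Exp1) = 1"
proof -
  interpret prob_space Exp1 by (rule prob_Exp1)
  have "(\<integral>\<^sup>+t. ennreal (\<integral>z. (\<lambda>_. 1::real) (t + z) \<partial>Exp1) \<partial>Exp1) = (\<integral>\<^sup>+t. ennreal (t * (\<lambda>_. 1::real) t) \<partial>Exp1)"
    by (rule C_1D[where K=1]) auto
  moreover have "(\<integral>z. (1::real) \<partial>Exp1) = 1" using prob_space by simp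
  moreover have "(\<integral>\<^sup>+t. ennreal 1 \<partial>Exp1) = 1" using emeasure_space_1 by simp
  ultimately show ?thesis by simp
qed

lemma diff_int:
  fixes g f :: "'a \<Rightarrow> real"
  assumes "prob_space N" "(\<lambda>u. g (Y u)) \<in> borel_measurable N" "\<And>z. \<bar>g z\<bar> \<le> K" "\<And>z. f z = g z - B"
  shows "(\<integral>u. f (Y u) - f y \<partial>N) = (\<integral>u. g (Y u) \<partial>N) - g y"
proof -
  interpret prob_space N by fact
  have int: "integrable N (\<lambda>u. g (Y u))"
    by (rule integrable_const_bound[where B=K]) (use assms in auto)
  have "(\<integral>u. f (Y u) - f y \<partial>N) = (\<integral>u. g (Y u) - g y \<partial>N)"
    using assms(4) by simp
  also have "\<dots> = (\<integral>u. g (Y u) \<partial>N) - g y"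
  proof -
    have c: "integrable N (\<lambda>u. g y)" by simp
    show ?thesis by (simp add: Bochner_Integration.integral_diff[OF int c] prob_space)
  qed
  finally show ?thesis .
qed

lemma int_eq_from_nn:
  fixes h1 h2 :: "'a \<Rightarrow> real"
  assumes "integrable M h1" "integrable M h2" "AE x in M. 0 \<le> h1 x" "AE x in M. 0 \<le> h2 x"
    "(\<integral>\<^sup>+x. ennreal (h1 x) \<partial>M) = (\<integral>\<^sup>+x. ennreal (h2 x) \<partial>M)"
  shows "integral\<^sup>L M h1 = integral\<^sup>L M h2"
proof -
  have "ennreal (integral\<^sup>L M h1) = ennreal (integral\<^sup>L M h2)"
    using assms by (simp add: nn_integral_eq_integral)
  moreover have "0 \<le> integral\<^sup>L M h1" "0 \<le> integral\<^sup>L M h2"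
    using assms by (auto intro: integral_nonneg_AE)
  ultimately show ?thesis by simp
qed

context
  fixes I :: "nat set" and g :: "(nat \<Rightarrow> real) \<Rightarrow> real" and K :: real
  assumes finI: "finite I"
    and gm[measurable]: "g \<in> borel_measurable (PiM I (\<lambda>_. Exp1))"
    and g0: "\<And>y. 0 \<le> g y" and gK: "\<And>y. g y \<le> K"
begin

lemma slice_meas:
  assumes "k \<in> I" "x \<in> space (PiM (I - {k}) (\<lambda>_. Exp1))"
  shows "(\<lambda>w. x(k := w)) \<in> measurable borel (PiM I (\<lambda>_. Exp1))"
  by (rule measurable_fun_upd[where J="I - {k}"]) (use assms in auto)

lemma slice2_meas:
  assumes "i \<in> I" "j \<in> I" "i \<noteq> j" "x \<in> space (PiM (I - {i} - {j}) (\<lambda>_. Exp1))"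
  shows "(\<lambda>p. x(i := fst p, j := snd p)) \<in> measurable (borel \<Otimes>\<^sub>M borel) (PiM I (\<lambda>_. Exp1))"
proof -
  have m1: "(\<lambda>p. x(i := fst p)) \<in> measurable (borel \<Otimes>\<^sub>M borel) (PiM (I - {j}) (\<lambda>_. Exp1))"
    by (rule measurable_fun_upd[where J="I - {i} - {j}"]) (use assms in auto)
  have m2: "snd \<in> measurable (borel \<Otimes>\<^sub>M borel) Exp1"
    by (simp add: measurable_cong_sets[OF refl sets_Exp1])
  show ?thesis
    by (rule measurable_fun_upd[where J="I - {j}" and f="\<lambda>p. x(i := fst p)" and h=snd and i=j, OF _ m1 m2]) (use assms in auto)
qed

lemma A_multi:
  assumes k: "k \<in> I"
  shows "(\<integral>\<^sup>+y. ennreal (y k * (\<integral>u. g (y(k := y k - y k * u)) \<partial>U01)) \<partial>PiM I (\<lambda>_. Exp1))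
       = (\<integral>\<^sup>+y. ennreal (g y) \<partial>PiM I (\<lambda>_. Exp1))"
proof -
  have [measurable]: "(\<lambda>y. ennreal (y k * (\<integral>u. g (y(k := y k - y k * u)) \<partial>U01))) \<in> borel_measurable (PiM I (\<lambda>_. Exp1))"
    using k by measurable
  show ?thesis
  proof (subst (1 2) lift1[OF finI k], measurable, rule nn_integral_cong)
    fix x assume x: "x \<in> space (PiM (I - {k}) (\<lambda>_. Exp1))"
    note sm[measurable] = slice_meas[OF k x]
    have "(\<integral>\<^sup>+t. ennreal (t * (\<integral>u. (\<lambda>w. g (x(k := w))) (t - t * u) \<partial>U01)) \<partial>Exp1)
        = (\<integral>\<^sup>+t. ennreal ((\<lambda>w. g (x(k := w))) t) \<partial>Exp1)"
      by (rule A_1D[where K=K]) (use g0 gK in auto)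
    then show "(\<integral>\<^sup>+t. ennreal ((x(k := t)) k * (\<integral>u. g ((x(k := t))(k := (x(k := t)) k - (x(k := t)) k * u)) \<partial>U01)) \<partial>Exp1)
        = (\<integral>\<^sup>+t. ennreal (g (x(k := t))) \<partial>Exp1)"
      by simp
  qed
qed

lemma C_multi:
  assumes k: "k \<in> I"
  shows "(\<integral>\<^sup>+y. ennreal (\<integral>z. g (y(k := y k + z)) \<partial>Exp1) \<partial>PiM I (\<lambda>_. Exp1))
       = (\<integral>\<^sup>+y. ennreal (y k * g y) \<partial>PiM I (\<lambda>_. Exp1))"
proof -
  have [measurable]: "(\<lambda>y. ennreal (\<integral>z. g (y(k := y k + z)) \<partial>Exp1)) \<in> borel_measurable (PiM I (\<lambda>_. Exp1))"
    using k by measurable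
  have [measurable]: "(\<lambda>y. ennreal (y k * g y)) \<in> borel_measurable (PiM I (\<lambda>_. Exp1))"
    using k by measurable
  show ?thesis
  proof (subst (1 2) lift1[OF finI k], measurable, rule nn_integral_cong)
    fix x assume x: "x \<in> space (PiM (I - {k}) (\<lambda>_. Exp1))"
    note sm[measurable] = slice_meas[OF k x]
    have "(\<integral>\<^sup>+t. ennreal (\<integral>z. (\<lambda>w. g (x(k := w))) (t + z) \<partial>Exp1) \<partial>Exp1)
        = (\<integral>\<^sup>+t. ennreal (t * (\<lambda>w. g (x(k := w))) t) \<partial>Exp1)"
      by (rule C_1D[where K=K]) (use g0 gK in auto)
    then show "(\<integral>\<^sup>+t. ennreal (\<integral>z. g ((x(k := t))(k := (x(k := t)) k + z)) \<partial>Exp1) \<partial>Exp1)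
        = (\<integral>\<^sup>+t. ennreal ((x(k := t)) k * g (x(k := t))) \<partial>Exp1)"
      by simp
  qed
qed

lemma B_multi:
  assumes i: "i \<in> I" "Suc i \<in> I"
  shows "(\<integral>\<^sup>+y. ennreal (y i * (\<integral>u. g (y(i := y i - y i * u, Suc i := y (Suc i) + y i * u)) \<partial>U01)) \<partial>PiM I (\<lambda>_. Exp1))
       = (\<integral>\<^sup>+y. ennreal (y (Suc i) * g y) \<partial>PiM I (\<lambda>_. Exp1))"
proof -
  have ne: "i \<noteq> Suc i" by simp
  have [measurable]: "(\<lambda>y. ennreal (y i * (\<integral>u. g (y(i := y i - y i * u, Suc i := y (Suc i) + y i * u)) \<partial>U01))) \<in> borel_measurable (PiM I (\<lambda>_. Exp1))"
    using i by measurable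
  have [measurable]: "(\<lambda>y. ennreal (y (Suc i) * g y)) \<in> borel_measurable (PiM I (\<lambda>_. Exp1))"
    using i by measurable
  show ?thesis
  proof (subst (1 2) lift2[OF finI i ne], measurable, rule nn_integral_cong)
    fix x assume x: "x \<in> space (PiM (I - {i} - {Suc i}) (\<lambda>_. Exp1))"
    have "(\<lambda>p. g (x(i := fst p, Suc i := snd p))) \<in> borel_measurable (borel \<Otimes>\<^sub>M borel)"
      by (rule measurable_compose[OF slice2_meas[OF i ne x] gm])
    then have m: "case_prod (\<lambda>p q. g (x(i := p, Suc i := q))) \<in> borel_measurable (borel \<Otimes>\<^sub>M borel)"
      by (simp add: split_beta')
    have "(\<integral>\<^sup>+b. \<integral>\<^sup>+a. ennreal (a * (\<integral>u. (\<lambda>p q. g (x(i := p, Suc i := q))) (a - a*u) (b + a*u) \<partial>U01)) \<partial>Exp1 \<partial>Exp1)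
       = (\<integral>\<^sup>+b. \<integral>\<^sup>+a. ennreal (b * (\<lambda>p q. g (x(i := p, Suc i := q))) a b) \<partial>Exp1 \<partial>Exp1)"
      by (rule B_2D[OF m, where K=K]) (use g0 gK in auto)
    then show "(\<integral>\<^sup>+b. \<integral>\<^sup>+a. ennreal ((x(Suc i := b, i := a)) i * (\<integral>u. g ((x(Suc i := b, i := a))(i := (x(Suc i := b, i := a)) i - (x(Suc i := b, i := a)) i * u, Suc i := (x(Suc i := b, i := a)) (Suc i) + (x(Suc i := b, i := a)) i * u)) \<partial>U01)) \<partial>Exp1 \<partial>Exp1)
      = (\<integral>\<^sup>+b. \<integral>\<^sup>+a. ennreal ((x(Suc i := b, i := a)) (Suc i) * g (x(Suc i := b, i := a))) \<partial>Exp1 \<partial>Exp1)"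
      by (simp add: fun_upd_twist[of "Suc i" i])
  qed
qed

lemma prob_M: "prob_space (PiM I (\<lambda>_. Exp1))"
  by (rule prob_space_PiM) (rule prob_Exp1)

lemma nn_g_fin: "(\<integral>\<^sup>+y. ennreal (g y) \<partial>PiM I (\<lambda>_. Exp1)) < \<infinity>"
proof -
  interpret prob_space "PiM I (\<lambda>_. Exp1)" by (rule prob_M)
  have "(\<integral>\<^sup>+y. ennreal (g y) \<partial>PiM I (\<lambda>_. Exp1)) \<le> (\<integral>\<^sup>+y. ennreal K \<partial>PiM I (\<lambda>_. Exp1))"
    by (rule nn_integral_mono) (use gK in \<open>auto intro: ennreal_leI\<close>)
  also have "\<dots> = ennreal K" using emeasure_space_1 by simp
  finally show ?thesis using le_less_trans by fastforce
qed

lemma nn_coord: assumes k: "k \<in> I" shows "(\<integral>\<^sup>+y. ennreal (y k) \<partial>PiM I (\<lambda>_. Exp1)) = 1"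
proof -
  interpret P': prob_space "PiM (I - {k}) (\<lambda>_. Exp1)" by (rule prob_space_PiM) (rule prob_Exp1)
  have "(\<integral>\<^sup>+y. ennreal (y k) \<partial>PiM I (\<lambda>_. Exp1)) = (\<integral>\<^sup>+x. \<integral>\<^sup>+t. ennreal ((x(k := t)) k) \<partial>Exp1 \<partial>PiM (I - {k}) (\<lambda>_. Exp1))"
    by (rule lift1[OF finI k]) (use k in measurable)
  also have "\<dots> = 1" using Exp1_mean P'.emeasure_space_1 by simp
  finally show ?thesis .
qed

lemma nn_yg_fin: assumes k: "k \<in> I" shows "(\<integral>\<^sup>+y. ennreal (y k * g y) \<partial>PiM I (\<lambda>_. Exp1)) < \<infinity>"
proof -
  have "(\<integral>\<^sup>+y. ennreal (y k * g y) \<partial>PiM I (\<lambda>_. Exp1)) \<le> (\<integral>\<^sup>+y. ennreal K * ennreal (y k) \<partial>PiM I (\<lambda>_. Exp1))"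
  proof (rule nn_integral_mono)
    fix y :: "nat \<Rightarrow> real"
    show "ennreal (y k * g y) \<le> ennreal K * ennreal (y k)"
    proof (cases "0 \<le> y k")
      case True
      have "g y * y k \<le> K * y k" by (rule mult_right_mono) (use True gK in auto)
      then have "y k * g y \<le> K * y k" by (simp add: mult.commute)
      then show ?thesis using True gK[of y] g0[of y] by (simp add: ennreal_mult'[symmetric] ennreal_leI)
    next
      case False
      then have "y k * g y \<le> 0" using g0[of y] by (simp add: mult_nonpos_nonneg)
      then show ?thesis by (simp add: ennreal_eq_0_iff[THEN iffD2])
    qed
  qed
  also have "\<dots> = ennreal K" using k by (simp add: nn_integral_cmult nn_coord)
  finally show ?thesis using le_less_trans by fastforce
qed

end



theorem theorem3p3:
  fixes n :: nat
  assumes "n \<ge> 2"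
  shows "gap_stationary n Exp1 (PiM {1..n - 1} (\<lambda>_. Exp1))"
proof -
  define m where "m = n - 1"
  define I where "I = {1..m}"
  have m1: "1 \<le> m" using assms by (simp add: m_def)
  have finI: "finite I" by (simp add: I_def)
  have mI: "m \<in> I" and oneI: "1 \<in> I" using m1 by (auto simp: I_def)
  have e: "{1..n - 1} = I" by (simp add: I_def m_def)
  have nm: "n - 1 = m" "n - 2 = m - 1" using assms by (auto simp: m_def)
  have iI: "i \<in> I" "Suc i \<in> I" if "i \<in> {1..m - 1}" for i using that by (auto simp: I_def)
  have sets: "sets (PiM I (\<lambda>_. Exp1)) = sets (gap_space n)"
    unfolding gap_space_def e by (rule sets_PiM_cong) auto
  have AEnn: "AE y in PiM I (\<lambda>_. Exp1). \<forall>i\<in>I. 0 \<le> y i"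
  proof (rule AE_finite_allI[OF finI])
    fix i assume i: "i \<in> I"
    have "AE t in Exp1. 0 \<le> t" unfolding Exp1_def
      by (subst AE_density) (auto simp: exponential_density_def)
    then show "AE y in PiM I (\<lambda>_. Exp1). 0 \<le> y i"
      by (rule AE_PiM_component[OF prob_Exp1 i])
  qed
  show ?thesis
    unfolding gap_stationary_def e
  proof (intro conjI allI impI)
    show "prob_space (PiM I (\<lambda>_. Exp1))" by (rule prob_space_PiM) (rule prob_Exp1)
    show "sets (PiM I (\<lambda>_. Exp1)) = sets (gap_space n)" by (rule sets)
    show "AE y in PiM I (\<lambda>_. Exp1). \<forall>i\<in>I. 0 \<le> y i" by (rule AEnn)
    fix f :: "(nat \<Rightarrow> real) \<Rightarrow> real" assume "f \<in> borel_measurable (gap_space n) \<and> (\<exists>B. \<forall>y. \<bar>f y\<bar> \<le> B)"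
    then obtain B :: real where fm: "f \<in> borel_measurable (gap_space n)" and fB: "\<And>y. \<bar>f y\<bar> \<le> B" by auto
    have B0: "0 \<le> B" using fB[of undefined] by simp
    define g where "g y = f y + B" for y
    have fg: "\<And>y. f y = g y - B" by (simp add: g_def)
    have fm'[measurable]: "f \<in> borel_measurable (PiM I (\<lambda>_. Exp1))"
      using fm by (simp add: measurable_cong_sets[OF sets refl])
    have gm[measurable]: "g \<in> borel_measurable (PiM I (\<lambda>_. Exp1))"
      unfolding g_def by measurable
    have g0: "0 \<le> g y" and gK: "g y \<le> 2 * B" and gabs: "\<bar>g y\<bar> \<le> 2 * B" for y
      using fB[of y] by (auto simp: g_def abs_le_iff)
    define A where "A y = (\<integral>u. g (y(m := y m - y m * u)) \<partial>U01)" for y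
    define Bf where "Bf i y = (\<integral>u. g (y(i := y i - y i * u, Suc i := y (Suc i) + y i * u)) \<partial>U01)" for i y
    define C where "C y = (\<integral>z. g (y(1 := y 1 + z)) \<partial>Exp1)" for y
    define S where "S k y = y k * g y" for k y
    have pw: "gap_gen n Exp1 f y = (y m * A y - S m y) + (\<Sum>i\<in>{1..m - 1}. y i * Bf i y - S i y) + (C y - g y)"
      if y: "y \<in> space (PiM I (\<lambda>_. Exp1))" for y
    proof -
      have [measurable]: "(\<lambda>u. y) \<in> measurable U01 (PiM I (\<lambda>_. Exp1))" "(\<lambda>u. y) \<in> measurable Exp1 (PiM I (\<lambda>_. Exp1))"
        using y by auto
      have 1: "(\<integral>u. f (y(m := y m - y m * u)) - f y \<partial>U01) = A y - g y"
        unfolding A_def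
        by (rule diff_int[where Y="\<lambda>u. y(m := y m - y m * u)", OF prob_U01 _ gabs fg]) (use mI in measurable)
      have 2: "(\<integral>u. f (y(i := y i - y i * u, Suc i := y (Suc i) + y i * u)) - f y \<partial>U01) = Bf i y - g y"
        if i: "i \<in> {1..m - 1}" for i
        unfolding Bf_def
        by (rule diff_int[where Y="\<lambda>u. y(i := y i - y i * u, Suc i := y (Suc i) + y i * u)", OF prob_U01 _ gabs fg])
          (use iI[OF i] in measurable)
      have 3: "(\<integral>z. f (y(1 := y 1 + z)) - f y \<partial>Exp1) = C y - g y"
        unfolding C_def
        by (rule diff_int[where Y="\<lambda>z. y(1 := y 1 + z)", OF prob_Exp1 _ gabs fg]) (use oneI in measurable)
      show ?thesis
        unfolding gap_gen_def nm 1 3 S_def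
        using 2 by (simp add: right_diff_distrib)
    qed
    let ?M = "PiM I (\<lambda>_. Exp1)"
    have A0: "0 \<le> A y" for y unfolding A_def by (intro integral_nonneg_AE AE_I2 g0)
    have Bf0: "0 \<le> Bf i y" for i y unfolding Bf_def by (intro integral_nonneg_AE AE_I2 g0)
    have C0: "0 \<le> C y" for y unfolding C_def by (intro integral_nonneg_AE AE_I2 g0)
    have mA[measurable]: "(\<lambda>y. y m * A y) \<in> borel_measurable ?M" unfolding A_def using mI by measurable
    have mB: "(\<lambda>y. y i * Bf i y) \<in> borel_measurable ?M" if i: "i \<in> {1..m - 1}" for i
      unfolding Bf_def using iI[OF i] by measurable
    have mC[measurable]: "C \<in> borel_measurable ?M" unfolding C_def using oneI by measurable
    have mS: "S k \<in> borel_measurable ?M" if k: "k \<in> I" for k unfolding S_def using k by measurable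
    have AEk: "AE y in ?M. 0 \<le> y k" if k: "k \<in> I" for k
      using AEnn by eventually_elim (use k in auto)
    have nA: "(\<integral>\<^sup>+y. ennreal (y m * A y) \<partial>?M) = (\<integral>\<^sup>+y. ennreal (g y) \<partial>?M)"
      unfolding A_def by (rule A_multi[OF finI gm g0 gK mI])
    have nB: "(\<integral>\<^sup>+y. ennreal (y i * Bf i y) \<partial>?M) = (\<integral>\<^sup>+y. ennreal (S (Suc i) y) \<partial>?M)"
      if i: "i \<in> {1..m - 1}" for i
      unfolding Bf_def S_def by (rule B_multi[OF finI gm g0 gK iI[OF i]])
    have nC: "(\<integral>\<^sup>+y. ennreal (C y) \<partial>?M) = (\<integral>\<^sup>+y. ennreal (S 1 y) \<partial>?M)"
      unfolding C_def S_def by (rule C_multi[OF finI gm g0 gK oneI])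
    have fg': "(\<integral>\<^sup>+y. ennreal (g y) \<partial>?M) < \<infinity>" by (rule nn_g_fin[OF finI gm g0 gK])
    have fS: "(\<integral>\<^sup>+y. ennreal (S k y) \<partial>?M) < \<infinity>" if k: "k \<in> I" for k
      unfolding S_def by (rule nn_yg_fin[OF finI gm g0 gK k])
    have AEg: "AE y in ?M. 0 \<le> g y" by (intro AE_I2 g0)
    have AES: "AE y in ?M. 0 \<le> S k y" if k: "k \<in> I" for k
      using AEk[OF k] by eventually_elim (simp add: S_def g0)
    have AEA: "AE y in ?M. 0 \<le> y m * A y"
      using AEk[OF mI] by eventually_elim (simp add: A0)
    have AEB: "AE y in ?M. 0 \<le> y i * Bf i y" if i: "i \<in> {1..m - 1}" for i
      using AEk[OF iI(1)[OF i]] by eventually_elim (simp add: Bf0)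
    have AEC: "AE y in ?M. 0 \<le> C y" by (intro AE_I2 C0)
    have intg: "integrable ?M g" by (rule integrableI_nonneg[OF gm AEg fg'])
    have intS: "integrable ?M (S k)" if k: "k \<in> I" for k
      by (rule integrableI_nonneg[OF mS[OF k] AES[OF k] fS[OF k]])
    have intA: "integrable ?M (\<lambda>y. y m * A y)"
      by (rule integrableI_nonneg[OF mA AEA], unfold nA, rule fg')
    have intB: "integrable ?M (\<lambda>y. y i * Bf i y)" if i: "i \<in> {1..m - 1}" for i
      by (rule integrableI_nonneg[OF mB[OF i] AEB[OF i]], unfold nB[OF i], rule fS[OF iI(2)[OF i]])
    have intC: "integrable ?M C"
      by (rule integrableI_nonneg[OF mC AEC], unfold nC, rule fS[OF oneI])
    have eA: "(\<integral>y. y m * A y \<partial>?M) = (\<integral>y. g y \<partial>?M)"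
      by (rule int_eq_from_nn[OF intA intg AEA AEg nA])
    have eB: "(\<integral>y. y i * Bf i y \<partial>?M) = (\<integral>y. S (Suc i) y \<partial>?M)" if i: "i \<in> {1..m - 1}" for i
      by (rule int_eq_from_nn[OF intB[OF i] intS[OF iI(2)[OF i]] AEB[OF i] AES[OF iI(2)[OF i]] nB[OF i]])
    have eC: "(\<integral>y. C y \<partial>?M) = (\<integral>y. S 1 y \<partial>?M)"
      by (rule int_eq_from_nn[OF intC intS[OF oneI] AEC AES[OF oneI] nC])
    have intSum: "integrable ?M (\<lambda>y. \<Sum>i\<in>{1..m - 1}. y i * Bf i y - S i y)"
      by (intro Bochner_Integration.integrable_sum Bochner_Integration.integrable_diff intB intS iI) auto
    have intComb: "integrable ?M (\<lambda>y. (y m * A y - S m y) + (\<Sum>i\<in>{1..m - 1}. y i * Bf i y - S i y) + (C y - g y))"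
      using intA intS[OF mI] intSum intC intg by auto
    have "integrable ?M (gap_gen n Exp1 f) \<longleftrightarrow> integrable ?M (\<lambda>y. (y m * A y - S m y) + (\<Sum>i\<in>{1..m - 1}. y i * Bf i y - S i y) + (C y - g y))"
      by (rule Bochner_Integration.integrable_cong) (simp_all add: pw)
    then show "integrable ?M (gap_gen n Exp1 f)" using intComb by simp
    have "(\<integral>y. gap_gen n Exp1 f y \<partial>?M) = (\<integral>y. (y m * A y - S m y) + (\<Sum>i\<in>{1..m - 1}. y i * Bf i y - S i y) + (C y - g y) \<partial>?M)"
      by (rule Bochner_Integration.integral_cong[OF refl pw])
    also have "\<dots> = ((\<integral>y. y m * A y \<partial>?M) - (\<integral>y. S m y \<partial>?M)) + (\<Sum>i\<in>{1..m - 1}. (\<integral>y. y i * Bf i y \<partial>?M) - (\<integral>y. S i y \<partial>?M)) + ((\<integral>y. C y \<partial>?M) - (\<integral>y. g y \<partial>?M))"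
    proof -
      have "(\<integral>y. (\<Sum>i\<in>{1..m - 1}. y i * Bf i y - S i y) \<partial>?M) = (\<Sum>i\<in>{1..m - 1}. (\<integral>y. y i * Bf i y - S i y \<partial>?M))"
        by (intro Bochner_Integration.integral_sum Bochner_Integration.integrable_diff intB intS iI) auto
      also have "\<dots> = (\<Sum>i\<in>{1..m - 1}. (\<integral>y. y i * Bf i y \<partial>?M) - (\<integral>y. S i y \<partial>?M))"
        by (rule sum.cong[OF refl], rule Bochner_Integration.integral_diff) (use intB intS iI in auto)
      finally have s: "(\<integral>y. (\<Sum>i\<in>{1..m - 1}. y i * Bf i y - S i y) \<partial>?M) = \<dots>" .
      show ?thesis
        using intA intS[OF mI] intSum intC intg s
        by (simp add: Bochner_Integration.integral_add Bochner_Integration.integral_diff)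
    qed
    also have "\<dots> = ((\<integral>y. g y \<partial>?M) - (\<integral>y. S m y \<partial>?M)) + (\<Sum>i\<in>{1..m - 1}. (\<integral>y. S (Suc i) y \<partial>?M) - (\<integral>y. S i y \<partial>?M)) + ((\<integral>y. S 1 y \<partial>?M) - (\<integral>y. g y \<partial>?M))"
      using eA eB eC by simp
    also have "(\<Sum>i\<in>{1..m - 1}. (\<integral>y. S (Suc i) y \<partial>?M) - (\<integral>y. S i y \<partial>?M)) = (\<integral>y. S (Suc (m - 1)) y \<partial>?M) - (\<integral>y. S 1 y \<partial>?M)"
      by (rule sum_Suc_diff[where f="\<lambda>k. \<integral>y. S k y \<partial>?M"]) simp
    also have "Suc (m - 1) = m" using m1 by simp
    finally show "(\<integral>y. gap_gen n Exp1 f y \<partial>?M) = 0" by simp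
  qed
qed

end
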